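(* Let $\pi=\gamma/Z$ be a probability density on $\mathbb{R}^d$ with $\gamma\ge 0$ and $Z=\int\gamma$, let $\sigma>0$ and $K\ge1$. Let $p^{\mathrm{ref}}(y_{0:K})=p^{\mathrm{ref}}_0(y_0)\prod_{k=0}^{K-1}p^{\mathrm{ref}}_{k+1|k}(y_{k+1}|y_k)$ be a Markov chain density on $(\mathbb{R}^d)^{K+1}$ (a discretisation of the reference process) with $p^{\mathrm{ref}}_0=\mathcal{N}(0,\sigma^2I)$ and with marginal density of $y_k$ denoted $p^{\mathrm{ref}}_k$, and let $q^\theta(y_{0:K})$ be a probability density on $(\mathbb{R}^d)^{K+1}$ (a discretisation of the proposal process), the law of $y_K$ under $q^\theta$ being denoted $q^\theta_0$. If $p^{\mathrm{ref}}_K(y)=p^{\mathrm{ref}}_0(y)$ for all $y$, then $$\mathrm{KL}(q^\theta\|p^{\mathrm{ref}})+\mathbb{E}_{y_K\sim q^\theta_0}\Big[\ln\Big(\frac{p^{\mathrm{ref}}_0(y_K)}{\pi(y_K)}\Big)\Big]\ge 0,$$ and, for $\hat Z=\dfrac{\gamma(y_K)\,p^{\mathrm{ref}}(y_{0:K})}{\mathcal{N}(y_K;0,\sigma^2I)\,q^\theta(y_{0:K})}$ with $y_{0:K}\sim q^\theta$, one has $\mathbb{E}_{q^\theta}[\log\hat Z]\le\log Z$ (an evidence lower bound). Furthermore, the Euler--Maruyama discretisation of the reference SDE $\mathrm{d}y_t=-\beta_{T-t}y_t\,\mathrm{d}t+\sigma\sqrt{2\beta_{T-t}}\,\mathrm{d}W_t$,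 $y_0\sim\mathcal{N}(0,\sigma^2I)$, with step $\delta=T/K>0$ and positive $\beta$, i.e. $y_{k+1}=y_k-\delta\beta_{T-k\delta}y_k+\sigma\sqrt{2\beta_{T-k\delta}\delta}\,\varepsilon_k$ with $\varepsilon_k\stackrel{\text{i.i.d.}}{\sim}\mathcal{N}(0,I)$, does not satisfy the condition $p^{\mathrm{ref}}_K=p^{\mathrm{ref}}_0$.
   Context: $\mathcal{N}(y;0,\sigma^2I)$ denotes the Gaussian density with mean $0$ and covariance $\sigma^2 I$ at $y$. The reference SDE is the time reversal of the stationary Ornstein--Uhlenbeck process $\mathrm{d}x_t=-\beta_tx_t\,\mathrm{d}t+\sigma\sqrt{2\beta_t}\,\mathrm{d}B_t$ started at $\mathcal{N}(0,\sigma^2I)$, where $t\mapsto\beta_t$ is a non-decreasing positive function on $[0,T]$. *)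

theory Defs
  imports "HOL-Probability.Probability"
begin

definition path_space :: "nat \<Rightarrow> (nat \<Rightarrow> 'a::euclidean_space) measure" where
  "path_space K = PiM {0..K} (\<lambda>_. lborel)"

definition gauss_dens :: "real \<Rightarrow> 'a::euclidean_space \<Rightarrow> 'a \<Rightarrow> real" where
  "gauss_dens v m y = (2 * pi * v) powr (- real DIM('a) / 2) * exp (- (norm (y - m))\<^sup>2 / (2 * v))"

definition prob_density :: "'b measure \<Rightarrow> ('b \<Rightarrow> real) \<Rightarrow> bool" where
  "prob_density M f \<longleftrightarrow> f \<in> borel_measurable M \<and> (\<forall>x\<in>space M. 0 \<le> f x)
      \<and> integrable M f \<and> integral\<^sup>L M f = 1"

definition trans_density :: "('a::euclidean_space \<Rightarrow> 'a \<Rightarrow> real) \<Rightarrow> bool" where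
  "trans_density t \<longleftrightarrow> (\<lambda>(x, y). t x y) \<in> borel_measurable (lborel \<Otimes>\<^sub>M lborel)
      \<and> (\<forall>x. prob_density lborel (t x))"

definition markov_dens :: "('a \<Rightarrow> real) \<Rightarrow> (nat \<Rightarrow> 'a \<Rightarrow> 'a \<Rightarrow> real) \<Rightarrow> nat \<Rightarrow> (nat \<Rightarrow> 'a) \<Rightarrow> real" where
  "markov_dens p0 tr K y = p0 (y 0) * (\<Prod>k<K. tr k (y k) (y (Suc k)))"

definition law_at :: "(nat \<Rightarrow> 'a::euclidean_space) measure \<Rightarrow> ((nat \<Rightarrow> 'a) \<Rightarrow> real) \<Rightarrow> nat \<Rightarrow> 'a measure" where
  "law_at M f k = distr (density M (\<lambda>y. ennreal (f y))) lborel (\<lambda>y. y k)"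

definition KL_dens :: "'b measure \<Rightarrow> ('b \<Rightarrow> real) \<Rightarrow> ('b \<Rightarrow> real) \<Rightarrow> real" where
  "KL_dens M f g = (\<integral>x. f x * ln (f x / g x) \<partial>M)"

text \<open>Euler--Maruyama transition density of the reference SDE with step T/K:
  y_{k+1} ~ N((1 - delta b) y_k, 2 sigma^2 b delta I), b = beta(T - k delta).\<close>
definition em_trans :: "real \<Rightarrow> (real \<Rightarrow> real) \<Rightarrow> real \<Rightarrow> nat \<Rightarrow> nat \<Rightarrow> 'a::euclidean_space \<Rightarrow> 'a \<Rightarrow> real" where
  "em_trans \<sigma> \<beta> T K k x y =
     (let \<delta> = T / real K; b = \<beta> (T - real k * \<delta>)
      in gauss_dens (2 * \<sigma>\<^sup>2 * b * \<delta>) ((1 - \<delta> * b) *\<^sub>R x) y)"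

end

theory Submission
  imports Defs
begin

lemma powr_aux: "(a::real) > 0 \<Longrightarrow> (1 / sqrt a) ^ n = a powr (- real n / 2)"
proof -
  assume a: "a > 0"
  have "a powr (- (1/2)) = 1 / a powr (1/2)" by (rule powr_minus_divide)
  also have "a powr (1/2) = sqrt a" using a by (simp add: powr_half_sqrt)
  finally have h: "1 / sqrt a = a powr (- (1/2))" by simp
  have "(1 / sqrt a) ^ n = (a powr (- (1/2))) ^ n" by (simp only: h)
  also have "\<dots> = a powr (- (1/2) * real n)" using a by (simp add: powr_realpow[symmetric] powr_powr)
  finally show ?thesis by simp
qed
lemma gauss_prod:
  fixes m y :: "'a::euclidean_space"
  assumes v: "v > 0"
  shows "gauss_dens v m y = (\<Prod>b\<in>Basis. normal_density (m\<bullet>b) (sqrt v) (y\<bullet>b))"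
proof -
  have e: "normal_density (m\<bullet>b) (sqrt v) (y\<bullet>b) = 1 / sqrt (2 * pi * v) * exp (- ((y - m)\<bullet>b)\<^sup>2 / (2 * v))" for b
    using v unfolding normal_density_def by (simp add: inner_diff_left)
  have n: "(norm (y - m))\<^sup>2 = (\<Sum>b\<in>Basis. ((y - m)\<bullet>b)\<^sup>2)"
    unfolding power2_norm_eq_inner by (subst euclidean_inner) (simp add: power2_eq_square)
  have "(\<Prod>b\<in>Basis. normal_density (m\<bullet>b) (sqrt v) (y\<bullet>b))
      = (\<Prod>b\<in>Basis. 1 / sqrt (2 * pi * v) * exp (- ((y - m)\<bullet>b)\<^sup>2 / (2 * v)))"
    by (simp only: e)
  also have "\<dots> = (1 / sqrt (2 * pi * v)) ^ DIM('a) * exp (\<Sum>b\<in>Basis. - ((y - m)\<bullet>b)\<^sup>2 / (2 * v))"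
    by (simp only: prod.distrib exp_sum[OF finite_Basis] prod_constant)
  also have "(\<Sum>b\<in>Basis. - ((y - m)\<bullet>b)\<^sup>2 / (2 * v)) = - (norm (y - m))\<^sup>2 / (2 * v)"
    unfolding n by (simp add: sum_negf sum_divide_distrib)
  also have "(1 / sqrt (2 * pi * v)) ^ DIM('a) = (2 * pi * v) powr (- real DIM('a) / 2)"
    using v by (intro powr_aux) simp
  finally show ?thesis unfolding gauss_dens_def by (rule sym)
qed

lemma normal_sq: "s > 0 \<Longrightarrow> has_bochner_integral lborel (\<lambda>x. normal_density \<mu> s x * x\<^sup>2) (\<mu>\<^sup>2 + s\<^sup>2)"
proof -
  assume s: "s > 0"
  have a: "has_bochner_integral lborel (\<lambda>x. normal_density \<mu> s x * (x - \<mu>)^2) (s\<^sup>2)"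
    using normal_moment_even[OF s, of \<mu> 1] by simp
  have b: "has_bochner_integral lborel (\<lambda>x. 2 * \<mu> * (normal_density \<mu> s x * x)) (2 * \<mu> * \<mu>)"
    using normal_moment_nz_1[OF s] by (intro has_bochner_integral_mult_right)
  have c0: "has_bochner_integral lborel (normal_density \<mu> s) 1"
    by (metis has_bochner_integral_integrable integrable_normal_density[OF s] integral_normal_density[OF s])
  have c: "has_bochner_integral lborel (\<lambda>x. \<mu>\<^sup>2 * normal_density \<mu> s x) (\<mu>\<^sup>2 * 1)"
    using c0 by (intro has_bochner_integral_mult_right)
  have H: "has_bochner_integral lborel (\<lambda>x. normal_density \<mu> s x * (x - \<mu>)^2 + 2 * \<mu> * (normal_density \<mu> s x * x) - \<mu>\<^sup>2 * normal_density \<mu> s x) (s\<^sup>2 + 2 * \<mu> * \<mu> - \<mu>\<^sup>2 * 1)"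
    by (intro has_bochner_integral_add has_bochner_integral_diff a b c)
  have E: "(\<lambda>x. normal_density \<mu> s x * (x - \<mu>)^2 + 2 * \<mu> * (normal_density \<mu> s x * x) - \<mu>\<^sup>2 * normal_density \<mu> s x) = (\<lambda>x. normal_density \<mu> s x * x\<^sup>2)"
    by (rule ext) (simp add: power2_eq_square algebra_simps)
  have C: "s\<^sup>2 + 2 * \<mu> * \<mu> - \<mu>\<^sup>2 * 1 = \<mu>\<^sup>2 + s\<^sup>2" by (simp add: power2_eq_square)
  show ?thesis using H unfolding E C .
qed



lemma gauss_nonneg: "v > 0 \<Longrightarrow> gauss_dens v m y \<ge> 0"
  unfolding gauss_dens_def by simp

lemma normal_nn1: "s > 0 \<Longrightarrow> (\<integral>\<^sup>+x. ennreal (normal_density \<mu> s x) \<partial>lborel) = 1"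
  by (subst nn_integral_eq_integral) (auto intro: integrable_normal_density)

lemma normal_nn2: "s > 0 \<Longrightarrow> (\<integral>\<^sup>+x. ennreal (normal_density \<mu> s x * x\<^sup>2) \<partial>lborel) = ennreal (\<mu>\<^sup>2 + s\<^sup>2)"
proof -
  assume s: "s > 0"
  note h = normal_sq[OF s, of \<mu>]
  show ?thesis
    by (subst nn_integral_eq_integral[OF integrable.intros[OF h]])
       (auto simp: has_bochner_integral_integral_eq[OF h])
qed

lemma norm_sq_basis: "(norm (y::'a::euclidean_space))\<^sup>2 = (\<Sum>b\<in>Basis. (y\<bullet>b)\<^sup>2)"
  unfolding power2_norm_eq_inner by (subst euclidean_inner) (simp add: power2_eq_square)

lemma gauss_nn1:
  fixes m :: "'a::euclidean_space"
  assumes v: "v > 0"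
  shows "(\<integral>\<^sup>+y. ennreal (gauss_dens v m y) \<partial>lborel) = 1"
proof -
  have "(\<integral>\<^sup>+y. ennreal (gauss_dens v m y) \<partial>lborel)
      = (\<integral>\<^sup>+y. (\<Prod>b\<in>Basis. ennreal (normal_density (m\<bullet>b) (sqrt v) (y\<bullet>b))) \<partial>lborel)"
    using v by (simp add: gauss_prod prod_ennreal)
  also have "\<dots> = (\<Prod>b\<in>Basis. (\<integral>\<^sup>+x. ennreal (normal_density (m\<bullet>b) (sqrt v) x) \<partial>lborel))"
    by (rule nn_integral_lborel_prod) auto
  also have "\<dots> = 1" using v by (simp add: normal_nn1)
  finally show ?thesis .
qed

lemma gauss_nn2:
  fixes m :: "'a::euclidean_space"
  assumes v: "v > 0"
  shows "(\<integral>\<^sup>+y. ennreal (gauss_dens v m y * (norm y)\<^sup>2) \<partial>lborel) = ennreal ((norm m)\<^sup>2 + real DIM('a) * v)"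
proof -
  let ?g = "\<lambda>c b x. ennreal (normal_density (m\<bullet>b) (sqrt v) x * (if b = c then x\<^sup>2 else 1))"
  have pt: "ennreal (gauss_dens v m y * (norm y)\<^sup>2) = (\<Sum>c\<in>Basis. (\<Prod>b\<in>Basis. ?g c b (y\<bullet>b)))" for y
  proof -
    have "gauss_dens v m y * (norm y)\<^sup>2 = (\<Sum>c\<in>Basis. gauss_dens v m y * (y\<bullet>c)\<^sup>2)"
      by (simp add: norm_sq_basis sum_distrib_left)
    also have "\<dots> = (\<Sum>c\<in>Basis. (\<Prod>b\<in>Basis. normal_density (m\<bullet>b) (sqrt v) (y\<bullet>b) * (if b = c then (y\<bullet>b)\<^sup>2 else 1)))"
      using v by (intro sum.cong refl) (simp add: prod.distrib gauss_prod prod.delta)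
    finally show ?thesis using v
      by (simp add: prod_ennreal prod_nonneg sum_nonneg)
  qed
  have "(\<integral>\<^sup>+y. ennreal (gauss_dens v m y * (norm y)\<^sup>2) \<partial>lborel)
      = (\<Sum>c\<in>Basis. (\<integral>\<^sup>+y. (\<Prod>b\<in>Basis. ?g c b (y\<bullet>b)) \<partial>lborel))"
    unfolding pt by (rule nn_integral_sum) auto
  also have "\<dots> = (\<Sum>c\<in>Basis. (\<Prod>b\<in>Basis. (\<integral>\<^sup>+x. ?g c b x \<partial>lborel)))"
    by (intro sum.cong refl nn_integral_lborel_prod) auto
  also have "\<dots> = (\<Sum>c\<in>Basis. ennreal ((m\<bullet>c)\<^sup>2 + v))"
  proof (intro sum.cong refl)
    fix c :: 'a assume c: "c \<in> Basis"
    have "(\<integral>\<^sup>+x. ?g c b x \<partial>lborel) = (if b = c then ennreal ((m\<bullet>c)\<^sup>2 + v) else 1)" for b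
      using v by (auto simp: normal_nn1 normal_nn2)
    then show "(\<Prod>b\<in>Basis. (\<integral>\<^sup>+x. ?g c b x \<partial>lborel)) = ennreal ((m\<bullet>c)\<^sup>2 + v)"
      using c by (simp add: prod.delta)
  qed
  also have "\<dots> = ennreal ((norm m)\<^sup>2 + real DIM('a) * v)"
  proof -
    have "(\<Sum>c\<in>Basis. ennreal ((m\<bullet>c)\<^sup>2 + v)) = ennreal (\<Sum>c\<in>Basis. (m\<bullet>c)\<^sup>2 + v)"
      using v by (intro sum_ennreal) simp
    also have "(\<Sum>c\<in>Basis. (m\<bullet>c)\<^sup>2 + v) = (norm m)\<^sup>2 + real DIM('a) * v"
      by (simp add: sum.distrib norm_sq_basis)
    finally show ?thesis .
  qed
  finally show ?thesis .
qed


lemma markov_meas: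
  fixes p0 :: "'a::euclidean_space \<Rightarrow> real"
  assumes p0: "p0 \<in> borel_measurable lborel"
    and tr: "\<And>k. k < n \<Longrightarrow> (\<lambda>(x, y). tr k x y) \<in> borel_measurable (lborel \<Otimes>\<^sub>M lborel)"
    and I: "{0..n} \<subseteq> I"
  shows "markov_dens p0 tr n \<in> borel_measurable (PiM I (\<lambda>_. lborel))"
proof -
  have 0: "(\<lambda>y. p0 (y 0)) \<in> borel_measurable (PiM I (\<lambda>_. lborel))"
    using I p0 by (intro measurable_compose[OF measurable_component_singleton, of 0 I]) auto
  have k: "(\<lambda>y. tr k (y k) (y (Suc k))) \<in> borel_measurable (PiM I (\<lambda>_. lborel))" if "k < n" for k
  proof -
    have "(\<lambda>y. (y k, y (Suc k))) \<in> measurable (PiM I (\<lambda>_. lborel)) (lborel \<Otimes>\<^sub>M lborel)"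
      using I that by (intro measurable_Pair measurable_component_singleton) auto
    from measurable_compose[OF this tr[OF that]] show ?thesis by simp
  qed
  show ?thesis unfolding markov_dens_def
    by (intro borel_measurable_times borel_measurable_prod 0 k) auto
qed

lemma markov_upd:
  "markov_dens p0 tr (Suc n) (x(Suc n := z)) = markov_dens p0 tr n x * tr n (x n) z"
proof -
  have "(\<Prod>k<n. tr k ((x(Suc n := z)) k) ((x(Suc n := z)) (Suc k))) = (\<Prod>k<n. tr k (x k) (x (Suc k)))"
    by (intro prod.cong) auto
  then show ?thesis unfolding markov_dens_def by (simp add: mult.assoc)
qed

lemma markov_nonneg:
  assumes "\<And>x. p0 x \<ge> 0" "\<And>k x y. k < n \<Longrightarrow> tr k x y \<ge> 0"
  shows "markov_dens p0 tr n y \<ge> 0"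
  unfolding markov_dens_def using assms by (intro mult_nonneg_nonneg prod_nonneg) auto

lemma markov_base:
  fixes p0 :: "'a::euclidean_space \<Rightarrow> real" and g :: "'a \<Rightarrow> ennreal"
  assumes p0: "p0 \<in> borel_measurable lborel" and g: "g \<in> borel_measurable lborel"
  shows "(\<integral>\<^sup>+y. ennreal (markov_dens p0 tr 0 y) * g (y 0) \<partial>path_space 0) = (\<integral>\<^sup>+x. ennreal (p0 x) * g x \<partial>lborel)"
proof -
  interpret product_sigma_finite "\<lambda>_::nat. (lborel :: 'a measure)" by standard
  have ps: "path_space 0 = PiM {0::nat} (\<lambda>_. (lborel :: 'a measure))" unfolding path_space_def by simp
  have md: "markov_dens p0 tr 0 y = p0 (y 0)" for y by (simp add: markov_dens_def)
  have "(\<integral>\<^sup>+y. (\<lambda>x. ennreal (p0 x) * g x) (y 0) \<partial>PiM {0::nat} (\<lambda>_. lborel)) = (\<integral>\<^sup>+x. ennreal (p0 x) * g x \<partial>lborel)"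
    using product_nn_integral_singleton[of "\<lambda>x. ennreal (p0 x) * g x" 0] p0 g by simp
  then show ?thesis unfolding ps md by simp
qed

lemma markov_step:
  fixes p0 :: "'a::euclidean_space \<Rightarrow> real" and g :: "'a \<Rightarrow> ennreal"
  assumes p0: "p0 \<in> borel_measurable lborel" and g: "g \<in> borel_measurable lborel"
    and tr: "\<And>k. k < Suc n \<Longrightarrow> (\<lambda>(x, y). tr k x y) \<in> borel_measurable (lborel \<Otimes>\<^sub>M lborel)"
    and p0nn: "\<And>x. p0 x \<ge> 0" and trnn: "\<And>k x y. k < Suc n \<Longrightarrow> tr k x y \<ge> 0"
  shows "(\<integral>\<^sup>+y. ennreal (markov_dens p0 tr (Suc n) y) * g (y (Suc n)) \<partial>path_space (Suc n))
       = (\<integral>\<^sup>+y. ennreal (markov_dens p0 tr n y) * (\<integral>\<^sup>+z. ennreal (tr n (y n) z) * g z \<partial>lborel) \<partial>path_space n)"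
proof -
  interpret product_sigma_finite "\<lambda>_::nat. (lborel :: 'a measure)" by standard
  have ins: "{0..Suc n} = insert (Suc n) {0..n}" by auto
  have mS: "markov_dens p0 tr (Suc n) \<in> borel_measurable (PiM (insert (Suc n) {0..n}) (\<lambda>_. lborel))"
    using p0 tr by (intro markov_meas) auto
  have gS: "(\<lambda>y. g (y (Suc n))) \<in> borel_measurable (PiM (insert (Suc n) {0..n}) (\<lambda>_. lborel))"
    using g by (intro measurable_compose[OF measurable_component_singleton, of "Suc n"]) auto
  have mS': "(\<lambda>x. ennreal (markov_dens p0 tr (Suc n) x)) \<in> borel_measurable (PiM (insert (Suc n) {0..n}) (\<lambda>_. lborel))"
    using mS by measurable
  have trm: "(\<lambda>z. tr n x z) \<in> borel_measurable lborel" for x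
    using measurable_Pair2[OF tr[of n], of x] by simp
  have "(\<integral>\<^sup>+y. ennreal (markov_dens p0 tr (Suc n) y) * g (y (Suc n)) \<partial>path_space (Suc n))
      = (\<integral>\<^sup>+x. (\<integral>\<^sup>+z. ennreal (markov_dens p0 tr (Suc n) (x(Suc n := z))) * g z \<partial>lborel) \<partial>PiM {0..n} (\<lambda>_. lborel))"
    unfolding path_space_def ins
    by (subst product_nn_integral_insert) (auto intro!: borel_measurable_times_ennreal mS' gS)
  also have "\<dots> = (\<integral>\<^sup>+x. (\<integral>\<^sup>+z. ennreal (markov_dens p0 tr n x) * (ennreal (tr n (x n) z) * g z) \<partial>lborel) \<partial>PiM {0..n} (\<lambda>_. lborel))"
    using p0nn trnn
    by (intro nn_integral_cong) (simp add: markov_upd ennreal_mult markov_nonneg mult.assoc)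
  also have "\<dots> = (\<integral>\<^sup>+y. ennreal (markov_dens p0 tr n y) * (\<integral>\<^sup>+z. ennreal (tr n (y n) z) * g z \<partial>lborel) \<partial>path_space n)"
    unfolding path_space_def using g trm
    by (intro nn_integral_cong nn_integral_cmult) auto
  finally show ?thesis .
qed


lemma gauss_nonneg': "gauss_dens v m y \<ge> 0"
  unfolding gauss_dens_def by simp

lemma gauss_meas[measurable]:
  "(\<lambda>(x, y). gauss_dens v (c *\<^sub>R x) (y::'a::euclidean_space)) \<in> borel_measurable (lborel \<Otimes>\<^sub>M lborel)"
  unfolding gauss_dens_def by measurable

lemma gauss_meas0[measurable]: "gauss_dens v m \<in> borel_measurable (lborel :: 'a::euclidean_space measure)"
  unfolding gauss_dens_def by measurable

lemma ennreal_aux: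
  fixes P A B N :: real
  assumes "P \<ge> 0" "A \<ge> 0" "B \<ge> 0" "N \<ge> 0"
  shows "ennreal P * ennreal (A * N + B) = ennreal A * (ennreal P * ennreal N) + ennreal B * (ennreal P * 1)"
proof -
  have "ennreal A * (ennreal P * ennreal N) = ennreal (A * (P * N))"
    using assms by (simp add: ennreal_mult)
  moreover have "ennreal B * (ennreal P * 1) = ennreal (B * P)"
    using assms by (simp add: ennreal_mult)
  moreover have "ennreal (A * (P * N)) + ennreal (B * P) = ennreal (A * (P * N) + B * P)"
    using assms by (simp add: ennreal_plus)
  moreover have "ennreal P * ennreal (A * N + B) = ennreal (P * (A * N + B))"
    using assms by (simp add: ennreal_mult)
  moreover have "P * (A * N + B) = A * (P * N) + B * P" by (simp add: algebra_simps)
  ultimately show ?thesis by simp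
qed

lemma em_not_stationary:
  fixes \<sigma> T :: real and \<beta> :: "real \<Rightarrow> real" and K :: nat
  assumes \<sigma>: "\<sigma> > 0" and K: "K \<ge> 1" and T: "T > 0" and \<beta>: "\<forall>t\<in>{0..T}. \<beta> t > 0"
  shows "law_at (path_space K) (markov_dens (gauss_dens (\<sigma>\<^sup>2) 0) (em_trans \<sigma> \<beta> T K) K) K
              \<noteq> density lborel (\<lambda>y. ennreal (gauss_dens (\<sigma>\<^sup>2) (0::'a::euclidean_space) y))"
proof
  define \<delta> where "\<delta> = T / real K"
  define b where "b k = \<beta> (T - real k * \<delta>)" for k :: nat
  define v where "v k = 2 * \<sigma>\<^sup>2 * b k * \<delta>" for k :: nat
  define c where "c k = 1 - \<delta> * b k" for k :: nat
  define d where "d = real DIM('a)"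
  let ?pz = "gauss_dens (\<sigma>\<^sup>2) (0::'a)"
  let ?tr = "em_trans \<sigma> \<beta> T K :: nat \<Rightarrow> 'a \<Rightarrow> 'a \<Rightarrow> real"
  let ?p = "markov_dens ?pz ?tr"
  have \<delta>pos: "\<delta> > 0" using T K unfolding \<delta>_def by simp
  have bpos: "b k > 0" if "k < K" for k
  proof -
    have "real k * \<delta> < T" using that T K unfolding \<delta>_def by (simp add: field_simps)
    moreover have "real k * \<delta> \<ge> 0" using \<delta>pos by simp
    ultimately show ?thesis unfolding b_def using \<beta> by auto
  qed
  have vpos: "v k > 0" if "k < K" for k using bpos[OF that] \<delta>pos \<sigma> unfolding v_def by simp
  have tr_eq: "?tr k x y = gauss_dens (v k) (c k *\<^sub>R x) y" for k x y
    unfolding em_trans_def Let_def v_def c_def b_def \<delta>_def by simp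
  have trm: "(\<lambda>(x, y). ?tr k x y) \<in> borel_measurable (lborel \<Otimes>\<^sub>M lborel)" for k
    unfolding tr_eq by measurable
  have trnn: "?tr k x y \<ge> 0" for k x y unfolding tr_eq by (rule gauss_nonneg')
  have p0m: "?pz \<in> borel_measurable lborel" by measurable
  have p0nn: "?pz x \<ge> 0" for x by (rule gauss_nonneg')
  have pm: "?p n \<in> borel_measurable (path_space m)" if "n \<le> m" for n m
    unfolding path_space_def using that p0m trm by (intro markov_meas) auto
  have sq_m: "(\<lambda>y. ennreal ((norm (y n :: 'a))\<^sup>2)) \<in> borel_measurable (path_space m)" if "n \<le> m" for n m :: nat
  proof -
    have a: "(\<lambda>y. y n) \<in> measurable (path_space m) (lborel :: 'a measure)"
      unfolding path_space_def using that by (intro measurable_component_singleton) auto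
    have b: "(\<lambda>z::'a. ennreal ((norm z)\<^sup>2)) \<in> borel_measurable lborel" by measurable
    from measurable_compose[OF a b] show ?thesis .
  qed
  define M0 where "M0 n = (\<integral>\<^sup>+y. ennreal (?p n y) * 1 \<partial>path_space n)" for n
  define M2 where "M2 n = (\<integral>\<^sup>+y. ennreal (?p n y) * ennreal ((norm (y n))\<^sup>2) \<partial>path_space n)" for n
  have main: "n \<le> K \<Longrightarrow> M0 n = 1 \<and> (\<exists>R. M2 n = ennreal R \<and> R \<ge> d * \<sigma>\<^sup>2 \<and> (n \<ge> 1 \<longrightarrow> R > d * \<sigma>\<^sup>2))" for n
  proof (induction n)
    case 0
    have "M0 0 = (\<integral>\<^sup>+x. ennreal (?pz x) * 1 \<partial>lborel)"
      unfolding M0_def using p0m by (intro markov_base) auto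
    also have "\<dots> = 1" using gauss_nn1[of "\<sigma>\<^sup>2" "0::'a"] \<sigma> by simp
    finally have a: "M0 0 = 1" .
    have "M2 0 = (\<integral>\<^sup>+x. ennreal (?pz x) * ennreal ((norm x)\<^sup>2) \<partial>lborel)"
      unfolding M2_def using p0m by (intro markov_base) auto
    also have "\<dots> = (\<integral>\<^sup>+x. ennreal (?pz x * (norm x)\<^sup>2) \<partial>lborel)"
      using p0nn by (intro nn_integral_cong) (simp add: ennreal_mult)
    also have "\<dots> = ennreal (d * \<sigma>\<^sup>2)" using gauss_nn2[of "\<sigma>\<^sup>2" "0::'a"] \<sigma> unfolding d_def by simp
    finally show ?case using a by auto
  next
    case (Suc n)
    then have nK: "n < K" and IH: "M0 n = 1 \<and> (\<exists>R. M2 n = ennreal R \<and> R \<ge> d * \<sigma>\<^sup>2 \<and> (n \<ge> 1 \<longrightarrow> R > d * \<sigma>\<^sup>2))" by auto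
    then obtain R where R: "M2 n = ennreal R" "R \<ge> d * \<sigma>\<^sup>2" by auto
    have inner0: "(\<integral>\<^sup>+z. ennreal (?tr n x z) * 1 \<partial>lborel) = 1" for x
      unfolding tr_eq using gauss_nn1[OF vpos[OF nK], of "c n *\<^sub>R x"] by simp
    have inner2: "(\<integral>\<^sup>+z. ennreal (?tr n x z) * ennreal ((norm z)\<^sup>2) \<partial>lborel) = ennreal ((c n)\<^sup>2 * (norm x)\<^sup>2 + d * v n)" for x
    proof -
      have "(\<integral>\<^sup>+z. ennreal (?tr n x z) * ennreal ((norm z)\<^sup>2) \<partial>lborel) = (\<integral>\<^sup>+z. ennreal (gauss_dens (v n) (c n *\<^sub>R x) z * (norm z)\<^sup>2) \<partial>lborel)"
        unfolding tr_eq by (intro nn_integral_cong) (simp add: ennreal_mult gauss_nonneg')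
      also have "\<dots> = ennreal ((norm (c n *\<^sub>R x))\<^sup>2 + d * v n)"
        using gauss_nn2[OF vpos[OF nK], of "c n *\<^sub>R x"] unfolding d_def by simp
      also have "(norm (c n *\<^sub>R x))\<^sup>2 = (c n)\<^sup>2 * (norm x)\<^sup>2" by (simp add: power_mult_distrib)
      finally show ?thesis .
    qed
    have "M0 (Suc n) = (\<integral>\<^sup>+y. ennreal (?p n y) * (\<integral>\<^sup>+z. ennreal (?tr n (y n) z) * 1 \<partial>lborel) \<partial>path_space n)"
      unfolding M0_def using p0m trm p0nn trnn by (intro markov_step) auto
    also have "\<dots> = M0 n" unfolding M0_def inner0 ..
    finally have a: "M0 (Suc n) = 1" using IH by simp
    have "M2 (Suc n) = (\<integral>\<^sup>+y. ennreal (?p n y) * (\<integral>\<^sup>+z. ennreal (?tr n (y n) z) * ennreal ((norm z)\<^sup>2) \<partial>lborel) \<partial>path_space n)"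
      unfolding M2_def using p0m trm p0nn trnn by (intro markov_step) auto
    also have "\<dots> = (\<integral>\<^sup>+y. ennreal ((c n)\<^sup>2) * (ennreal (?p n y) * ennreal ((norm (y n))\<^sup>2)) + ennreal (d * v n) * (ennreal (?p n y) * 1) \<partial>path_space n)"
      unfolding inner2 using vpos[OF nK] p0nn trnn
      by (intro nn_integral_cong ennreal_aux markov_nonneg) (auto simp: d_def)
    also have "\<dots> = ennreal ((c n)\<^sup>2) * M2 n + ennreal (d * v n) * M0 n"
    proof -
      have m1: "(\<lambda>y. ennreal (?p n y) * ennreal ((norm (y n))\<^sup>2)) \<in> borel_measurable (path_space n)"
        using pm[of n n] sq_m[of n n] by measurable
      have m0: "(\<lambda>y. ennreal (?p n y) * 1) \<in> borel_measurable (path_space n)"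
        using pm[of n n] by measurable
      show ?thesis unfolding M0_def M2_def
        using m0 m1 by (simp add: nn_integral_add nn_integral_cmult del: mult_1_right)
    qed
    also have "\<dots> = ennreal ((c n)\<^sup>2 * R + d * v n)"
    proof -
      have dpos: "d > 0" unfolding d_def by simp
      have R0: "R \<ge> 0" using R(2) dpos by (meson order_trans zero_le_power2 mult_nonneg_nonneg less_imp_le)
      have e1: "ennreal ((c n)\<^sup>2) * M2 n = ennreal ((c n)\<^sup>2 * R)" using R(1) R0 by (simp add: ennreal_mult)
      have e2: "ennreal (d * v n) * M0 n = ennreal (d * v n)" using IH by simp
      have e3: "ennreal ((c n)\<^sup>2 * R) + ennreal (d * v n) = ennreal ((c n)\<^sup>2 * R + d * v n)"
        using R0 vpos[OF nK] dpos by (intro ennreal_plus[symmetric]) auto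
      show ?thesis unfolding e1 e2 by (rule e3)
    qed
    finally have b2: "M2 (Suc n) = ennreal ((c n)\<^sup>2 * R + d * v n)" .
    have key: "(c n)\<^sup>2 * R + d * v n - d * \<sigma>\<^sup>2 = (c n)\<^sup>2 * (R - d * \<sigma>\<^sup>2) + d * \<sigma>\<^sup>2 * (\<delta> * b n)\<^sup>2"
      unfolding c_def v_def by (simp add: power2_eq_square algebra_simps)
    have "d > 0" unfolding d_def by simp
    then have "d * \<sigma>\<^sup>2 * (\<delta> * b n)\<^sup>2 > 0" using \<sigma> \<delta>pos bpos[OF nK] by simp
    moreover have "(c n)\<^sup>2 * (R - d * \<sigma>\<^sup>2) \<ge> 0" using R by simp
    ultimately have "(c n)\<^sup>2 * R + d * v n > d * \<sigma>\<^sup>2" using key by linarith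
    then show ?case using a b2 by auto
  qed
  assume eq: "law_at (path_space K) (?p K) K = density lborel (\<lambda>y. ennreal (?pz y))"
  obtain R where R: "M2 K = ennreal R" "R > d * \<sigma>\<^sup>2" using main[of K] K by auto
  have projm: "(\<lambda>y. y K) \<in> measurable (density (path_space K) (\<lambda>y. ennreal (?p K y))) (lborel :: 'a measure)"
    unfolding path_space_def by (simp add: measurable_component_singleton cong: measurable_cong_sets)
  have "(\<integral>\<^sup>+z. ennreal ((norm z)\<^sup>2) \<partial>law_at (path_space K) (?p K) K) = M2 K"
    unfolding law_at_def M2_def using projm pm[of K K] sq_m[of K K]
    by (simp add: nn_integral_distr nn_integral_density)
  moreover have "(\<integral>\<^sup>+z. ennreal ((norm z)\<^sup>2) \<partial>density lborel (\<lambda>y. ennreal (?pz y))) = ennreal (d * \<sigma>\<^sup>2)"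
  proof -
    have "(\<integral>\<^sup>+z. ennreal ((norm z)\<^sup>2) \<partial>density lborel (\<lambda>y. ennreal (?pz y))) = (\<integral>\<^sup>+z. ennreal (?pz z * (norm z)\<^sup>2) \<partial>lborel)"
      using p0nn by (simp add: nn_integral_density ennreal_mult)
    also have "\<dots> = ennreal (d * \<sigma>\<^sup>2)" using gauss_nn2[of "\<sigma>\<^sup>2" "0::'a"] \<sigma> unfolding d_def by simp
    finally show ?thesis .
  qed
  ultimately have "ennreal R = ennreal (d * \<sigma>\<^sup>2)" using eq R by simp
  moreover have "d * \<sigma>\<^sup>2 \<ge> 0" unfolding d_def by simp
  ultimately have "R = d * \<sigma>\<^sup>2" using R by (simp add: ennreal_inj)
  then show False using R by simp
qed


lemma gauss_pos: "v > 0 \<Longrightarrow> gauss_dens v m y > 0"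
  unfolding gauss_dens_def by simp

lemma kl_pt:
  fixes qq pp g zz pzz :: real
  assumes "qq \<ge> 0" "pp \<ge> 0" "pzz > 0" "zz > 0" "g \<ge> 0" "qq > 0 \<longrightarrow> pp > 0 \<and> g > 0"
  shows "qq - pp * ((g / zz) / pzz) \<le> qq * ln (qq / pp) + qq * ln (pzz / (g / zz))"
proof (cases "qq = 0")
  case True
  then show ?thesis using assms by simp
next
  case False
  then have q: "qq > 0" using assms by simp
  then have p: "pp > 0" and gg: "g > 0" using assms by auto
  define x where "x = pp * (g / zz) / (qq * pzz)"
  have x: "x > 0" unfolding x_def using q p gg assms by simp
  have lx: "ln x \<le> x - 1" using ln_le_minus_one[OF x] .
  have e: "ln (qq / pp) + ln (pzz / (g / zz)) = - ln x"
    unfolding x_def using q p gg assms by (simp add: ln_div ln_mult)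
  have "qq * ln (qq / pp) + qq * ln (pzz / (g / zz)) = qq * (- ln x)"
    using e by (simp add: distrib_left[symmetric])
  also have "\<dots> \<ge> qq * (1 - x)" using lx q by (intro mult_left_mono) auto
  also have "qq * (1 - x) = qq - pp * ((g / zz) / pzz)" unfolding x_def using q assms by (simp add: field_simps)
  finally show ?thesis .
qed

lemma elbo_pt:
  fixes qq pp g zz pzz :: real
  assumes "qq > 0" "pp > 0" "pzz > 0" "zz > 0" "g > 0"
  shows "ln (g * pp / (pzz * qq)) = ln zz - (ln (qq / pp) + ln (pzz / (g / zz)))"
  using assms by (simp add: ln_div ln_mult)

lemma part1:
  fixes \<sigma> :: real and K :: nat
    and \<gamma> :: "'a::euclidean_space \<Rightarrow> real"
    and tr :: "nat \<Rightarrow> 'a \<Rightarrow> 'a \<Rightarrow> real"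
    and q :: "(nat \<Rightarrow> 'a) \<Rightarrow> real"
  assumes \<sigma>: "\<sigma> > 0"
    and gnn: "\<forall>y. 0 \<le> \<gamma> y" and gm: "\<gamma> \<in> borel_measurable lborel" and gi: "integrable lborel \<gamma>"
    and Zpos: "integral\<^sup>L lborel \<gamma> > 0"
    and trd: "\<forall>k<K. trans_density (tr k)"
    and qd: "prob_density (path_space K) q"
    and law: "law_at (path_space K) (markov_dens (gauss_dens (\<sigma>\<^sup>2) 0) tr K) K
         = density lborel (\<lambda>y. ennreal (gauss_dens (\<sigma>\<^sup>2) 0 y))"
    and abs: "AE y in path_space K. q y > 0 \<longrightarrow> markov_dens (gauss_dens (\<sigma>\<^sup>2) 0) tr K y > 0"
    and gae: "AE y in law_at (path_space K) q K. \<gamma> y > 0"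
    and hi: "integrable (path_space K)
         (\<lambda>y. q y * ln (q y / markov_dens (gauss_dens (\<sigma>\<^sup>2) 0) tr K y))"
    and Li: "integrable (law_at (path_space K) q K)
         (\<lambda>y. ln (gauss_dens (\<sigma>\<^sup>2) 0 y / (\<gamma> y / integral\<^sup>L lborel \<gamma>)))"
  shows "KL_dens (path_space K) q (markov_dens (gauss_dens (\<sigma>\<^sup>2) 0) tr K)
         + (\<integral>y. ln (gauss_dens (\<sigma>\<^sup>2) 0 y / (\<gamma> y / integral\<^sup>L lborel \<gamma>))
              \<partial>law_at (path_space K) q K) \<ge> 0
     \<and> (\<integral>y. ln (\<gamma> (y K) * markov_dens (gauss_dens (\<sigma>\<^sup>2) 0) tr K y
                   / (gauss_dens (\<sigma>\<^sup>2) 0 (y K) * q y))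
           \<partial>density (path_space K) (\<lambda>y. ennreal (q y)))
         \<le> ln (integral\<^sup>L lborel \<gamma>)"
proof -
  define M :: "(nat \<Rightarrow> 'a) measure" where "M = path_space K"
  define Z where "Z = integral\<^sup>L lborel \<gamma>"
  define pz where "pz = gauss_dens (\<sigma>\<^sup>2) (0::'a)"
  define p where "p = markov_dens pz tr K"
  define L where "L z = ln (pz z / (\<gamma> z / Z))" for z
  define h where "h y = q y * ln (q y / p y)" for y
  define G where "G y = p y * ((\<gamma> (y K) / Z) / pz (y K))" for y
  define D where "D = density M (\<lambda>y. ennreal (q y))"
  note defs = M_def[symmetric] Z_def[symmetric] pz_def[symmetric] p_def[symmetric]
  have law': "law_at M p K = density lborel (\<lambda>y. ennreal (pz y))" using law unfolding defs .
  have abs': "AE y in M. q y > 0 \<longrightarrow> p y > 0" using abs unfolding defs .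
  have gae': "AE y in law_at M q K. \<gamma> y > 0" using gae unfolding defs .
  have hi': "integrable M h" using hi unfolding defs h_def[abs_def] .
  have Li': "integrable (law_at M q K) L" using Li unfolding defs L_def[abs_def] .
  have Zpos': "Z > 0" using Zpos unfolding Z_def .
  have pzpos: "pz z > 0" for z unfolding pz_def using \<sigma> by (intro gauss_pos) simp
  have pzm[measurable]: "pz \<in> borel_measurable lborel" unfolding pz_def by measurable
  have trm: "\<And>k. k < K \<Longrightarrow> (\<lambda>(x, y). tr k x y) \<in> borel_measurable (lborel \<Otimes>\<^sub>M lborel)"
    using trd unfolding trans_density_def by auto
  have trnn: "\<And>k x y. k < K \<Longrightarrow> tr k x y \<ge> 0"
    using trd unfolding trans_density_def prob_density_def by auto
  have pm[measurable]: "p \<in> borel_measurable M" unfolding p_def M_def path_space_def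
    using pzm trm by (intro markov_meas) auto
  have pnn: "p y \<ge> 0" for y unfolding p_def using pzpos trnn
    by (intro markov_nonneg) (auto intro: less_imp_le)
  have qm[measurable]: "q \<in> borel_measurable M" and qnn: "\<And>y. y \<in> space M \<Longrightarrow> q y \<ge> 0"
    and qi: "integrable M q" and q1: "integral\<^sup>L M q = 1"
    using qd unfolding prob_density_def M_def by auto
  have projm[measurable]: "(\<lambda>y. y K) \<in> measurable M (lborel :: 'a measure)"
    unfolding M_def path_space_def by (intro measurable_component_singleton) auto
  have projmD: "(\<lambda>y. y K) \<in> measurable (density M f) (lborel :: 'a measure)" for f
    using projm by (simp cong: measurable_cong_sets)
  have sets_law: "sets (law_at M f K) = sets lborel" for f unfolding law_at_def by simp
  have Lm[measurable]: "L \<in> borel_measurable lborel"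
    using borel_measurable_integrable[OF Li'] by (simp cong: measurable_cong_sets add: sets_law)
  have gm'[measurable]: "\<gamma> \<in> borel_measurable lborel" by (rule gm)
  have A1: "(\<integral>z. L z \<partial>law_at M q K) = (\<integral>y. q y * L (y K) \<partial>M)"
  proof -
    have "(\<integral>z. L z \<partial>law_at M q K) = (\<integral>y. L (y K) \<partial>D)"
      unfolding law_at_def D_def by (rule integral_distr[OF projmD Lm])
    also have "\<dots> = (\<integral>y. q y *\<^sub>R L (y K) \<partial>M)"
      unfolding D_def using qnn by (intro integral_density) auto
    finally show ?thesis by simp
  qed
  have A2: "integrable M (\<lambda>y. q y * L (y K))"
  proof -
    have "integrable D (\<lambda>y. L (y K))"
      using Li' unfolding law_at_def D_def by (subst (asm) integrable_distr_eq[OF projmD Lm])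
    then show ?thesis
      unfolding D_def using qnn by (subst (asm) integrable_density) auto
  qed
  define \<phi> where "\<phi> z = (\<gamma> z / Z) / pz z" for z
  have \<phi>m[measurable]: "\<phi> \<in> borel_measurable lborel" unfolding \<phi>_def by measurable
  have \<phi>nn: "\<phi> z \<ge> 0" for z unfolding \<phi>_def using gnn Zpos' pzpos[of z] by simp
  have Gm[measurable]: "G \<in> borel_measurable M" unfolding G_def by measurable
  have Geq: "G y = p y * \<phi> (y K)" for y unfolding G_def \<phi>_def by simp
  have Gnn: "G y \<ge> 0" for y using Geq[of y] pnn[of y] \<phi>nn[of "y K"] by simp
  have Gnn1: "(\<integral>\<^sup>+y. ennreal (G y) \<partial>M) = 1"
  proof -
    have "(\<integral>\<^sup>+y. ennreal (G y) \<partial>M) = (\<integral>\<^sup>+y. ennreal (p y) * ennreal (\<phi> (y K)) \<partial>M)"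
      by (intro nn_integral_cong) (simp only: Geq ennreal_mult[OF pnn \<phi>nn])
    also have "\<dots> = (\<integral>\<^sup>+y. ennreal (\<phi> (y K)) \<partial>density M (\<lambda>y. ennreal (p y)))"
      by (rule nn_integral_density[symmetric]) auto
    also have "\<dots> = (\<integral>\<^sup>+z. ennreal (\<phi> z) \<partial>law_at M p K)"
      unfolding law_at_def using \<phi>m by (subst nn_integral_distr[OF projmD]) simp_all
    also have "\<dots> = (\<integral>\<^sup>+z. ennreal (pz z) * ennreal (\<phi> z) \<partial>lborel)"
      unfolding law' by (rule nn_integral_density) measurable
    also have "\<dots> = (\<integral>\<^sup>+z. ennreal (\<gamma> z / Z) \<partial>lborel)"
    proof (intro nn_integral_cong)
      fix z
      have "pz z * \<phi> z = \<gamma> z / Z" using pzpos[of z] by (simp add: \<phi>_def)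
      then show "ennreal (pz z) * ennreal (\<phi> z) = ennreal (\<gamma> z / Z)"
        using ennreal_mult[OF less_imp_le[OF pzpos[of z]] \<phi>nn[of z]] by simp
    qed
    also have "\<dots> = ennreal (\<integral>z. \<gamma> z / Z \<partial>lborel)"
      using gi gnn Zpos' by (intro nn_integral_eq_integral) auto
    also have "(\<integral>z. \<gamma> z / Z \<partial>lborel) = 1" using Zpos' unfolding Z_def by simp
    finally show ?thesis by simp
  qed
  have Gi: "integrable M G"
    using Gnn Gnn1 by (intro integrableI_nonneg) auto
  have GI: "integral\<^sup>L M G = 1"
    using Gnn Gnn1 by (subst integral_eq_nn_integral) auto
  have gaeD: "AE y in D. \<gamma> (y K) > 0"
  proof -
    have "{x \<in> space lborel. \<gamma> x > 0} \<in> sets (lborel :: 'a measure)" by measurable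
    then show ?thesis using gae' unfolding law_at_def D_def by (subst (asm) AE_distr_iff[OF projmD]) auto
  qed
  have gaeM: "AE y in M. q y > 0 \<longrightarrow> \<gamma> (y K) > 0"
    using gaeD unfolding D_def by (subst (asm) AE_density) auto
  have ptC: "AE y in M. q y - G y \<le> h y + q y * L (y K)"
    using gaeM abs' AE_space
  proof eventually_elim
    case (elim y)
    show ?case unfolding G_def h_def L_def
      using elim qnn[of y] pnn[of y] pzpos[of "y K"] Zpos' gnn
      by (intro kl_pt) auto
  qed
  have qLi: "integrable M (\<lambda>y. h y + q y * L (y K))" using Bochner_Integration.integrable_add[OF hi' A2] by simp
  have S_ge: "(\<integral>y. h y \<partial>M) + (\<integral>y. q y * L (y K) \<partial>M) \<ge> 0"
  proof -
    have "(\<integral>y. q y - G y \<partial>M) \<le> (\<integral>y. h y + q y * L (y K) \<partial>M)"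
      using qi Gi qLi ptC by (intro integral_mono_AE) auto
    moreover have "(\<integral>y. q y - G y \<partial>M) = 0" using qi Gi q1 GI by simp
    moreover have "(\<integral>y. h y + q y * L (y K) \<partial>M) = (\<integral>y. h y \<partial>M) + (\<integral>y. q y * L (y K) \<partial>M)"
      using Bochner_Integration.integral_add[OF hi' A2] by simp
    ultimately show ?thesis by simp
  qed
  have part_a: "KL_dens M q p + (\<integral>z. L z \<partial>law_at M q K) \<ge> 0"
    using S_ge unfolding KL_dens_def A1 h_def .
  define E where "E y = ln (\<gamma> (y K) * p y / (pz (y K) * q y))" for y
  define F where "F y = ln (q y / p y) + L (y K)" for y
  have Em[measurable]: "E \<in> borel_measurable M" unfolding E_def by measurable
  have Fm[measurable]: "F \<in> borel_measurable M" unfolding F_def by measurable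
  have aeD: "AE y in D. E y = ln Z - F y"
  proof -
    have "AE y in M. q y > 0 \<longrightarrow> E y = ln Z - F y"
      using gaeM abs'
    proof eventually_elim
      case (elim y)
      show ?case unfolding E_def F_def L_def
        using elim pzpos[of "y K"] Zpos' by (intro impI elbo_pt) auto
    qed
    then show ?thesis unfolding D_def by (subst AE_density) auto
  qed
  have "(\<integral>y. E y \<partial>D) = (\<integral>y. ln Z - F y \<partial>D)"
    using aeD unfolding D_def by (intro integral_cong_AE) auto
  also have "\<dots> = (\<integral>y. q y *\<^sub>R (ln Z - F y) \<partial>M)"
    unfolding D_def using qnn by (intro integral_density) auto
  also have "\<dots> = (\<integral>y. ln Z * q y - (h y + q y * L (y K)) \<partial>M)"
    unfolding F_def h_def by (rule Bochner_Integration.integral_cong) (simp_all add: algebra_simps)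
  also have "\<dots> = ln Z * (\<integral>y. q y \<partial>M) - (\<integral>y. h y + q y * L (y K) \<partial>M)"
    using Bochner_Integration.integral_diff[OF integrable_mult_right[OF qi, of "ln Z"] qLi] by simp
  also have "\<dots> = ln Z - ((\<integral>y. h y \<partial>M) + (\<integral>y. q y * L (y K) \<partial>M))"
    using q1 Bochner_Integration.integral_add[OF hi' A2] by simp
  finally have part_b: "(\<integral>y. E y \<partial>D) \<le> ln Z" using S_ge by simp
  show ?thesis
    using part_a part_b unfolding E_def D_def L_def KL_dens_def
    unfolding defs by blast
qed

theorem proposition2:
  fixes \<sigma> :: real and K :: nat
    and \<gamma> :: "'a::euclidean_space \<Rightarrow> real"
    and tr :: "nat \<Rightarrow> 'a \<Rightarrow> 'a \<Rightarrow> real"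
    and q :: "(nat \<Rightarrow> 'a) \<Rightarrow> real"
  assumes "\<sigma> > 0" and "K \<ge> 1"
  shows
   "((\<forall>y. 0 \<le> \<gamma> y) \<and> \<gamma> \<in> borel_measurable lborel \<and> integrable lborel \<gamma>
       \<and> integral\<^sup>L lborel \<gamma> > 0
     \<and> (\<forall>k<K. trans_density (tr k))
     \<and> prob_density (path_space K) q
     \<and> law_at (path_space K) (markov_dens (gauss_dens (\<sigma>\<^sup>2) 0) tr K) K
         = density lborel (\<lambda>y. ennreal (gauss_dens (\<sigma>\<^sup>2) 0 y))
     \<and> (AE y in path_space K. q y > 0 \<longrightarrow> markov_dens (gauss_dens (\<sigma>\<^sup>2) 0) tr K y > 0)
     \<and> (AE y in law_at (path_space K) q K. \<gamma> y > 0)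
     \<and> integrable (path_space K)
         (\<lambda>y. q y * ln (q y / markov_dens (gauss_dens (\<sigma>\<^sup>2) 0) tr K y))
     \<and> integrable (law_at (path_space K) q K)
         (\<lambda>y. ln (gauss_dens (\<sigma>\<^sup>2) 0 y / (\<gamma> y / integral\<^sup>L lborel \<gamma>)))
     \<longrightarrow>
       KL_dens (path_space K) q (markov_dens (gauss_dens (\<sigma>\<^sup>2) 0) tr K)
         + (\<integral>y. ln (gauss_dens (\<sigma>\<^sup>2) 0 y / (\<gamma> y / integral\<^sup>L lborel \<gamma>))
              \<partial>law_at (path_space K) q K) \<ge> 0
     \<and> (\<integral>y. ln (\<gamma> (y K) * markov_dens (gauss_dens (\<sigma>\<^sup>2) 0) tr K y
                   / (gauss_dens (\<sigma>\<^sup>2) 0 (y K) * q y))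
           \<partial>density (path_space K) (\<lambda>y. ennreal (q y)))
         \<le> ln (integral\<^sup>L lborel \<gamma>))
    \<and> (\<forall>(\<beta> :: real \<Rightarrow> real) T. T > 0 \<and> (\<forall>t\<in>{0..T}. \<beta> t > 0) \<and> mono_on {0..T} \<beta>
        \<longrightarrow> law_at (path_space K) (markov_dens (gauss_dens (\<sigma>\<^sup>2) 0) (em_trans \<sigma> \<beta> T K) K) K
              \<noteq> density lborel (\<lambda>y. ennreal (gauss_dens (\<sigma>\<^sup>2) (0::'a) y)))"
    using part1[OF assms(1)] em_not_stationary[OF assms(1) assms(2)] by blast

end
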